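(* Assume the standing setting below and the structural assumption (H) below (with compact set $K\subset\Sigma$). Let $u$ be the solution of (E) and $c$ the ergodic constant. Then for every $x_0\in K$, the function $t\mapsto u(x_0,t)+ct$ is nonincreasing on $[0,\infty)$.
   Context: Standing setting. $\mathbb T^N=\mathbb R^N/\mathbb Z^N$ is the flat torus, $\Theta$ is a metric space and $C>0$ is a fixed constant. For every $\theta\in\Theta$: $\sigma_\theta\in W^{1,\infty}(\mathbb T^N;\mathcal M_N)$ with $|\sigma_\theta|,|D\sigma_\theta|\le C$, and $A_\theta=\sigma_\theta\sigma_\theta^T$; $H_\theta\in W^{1,\infty}_{\rm loc}(\mathbb T^N\times\mathbb R^N)$ with $|H_\theta(x,0)|\le C$, and for every $R>0$ there is $C_R>0$ independent of $\theta$ with $|H_\theta(x,p)-H_\theta(y,q)|\le C_R(|x-y|+|p-q|)$ for $|p|,|q|\le R$. (E): $u_t+\sup_{\theta}\{-\mathrm{tr}(A_\theta(x)D^2u)+H_\theta(x,Du)\}=0$ in $\mathbb T^N\times(0,\infty)$, $u(x,0)=u_0(x)$; (E$_\lambda$): $\lambda v_\lambda+\sup_{\theta}\{-\mathrm{tr}(A_\theta D^2v_\lambda)+H_\theta(x,Dv_\lambda)\}=0$; (S): $\sup_{\theta}\{-\mathrm{tr}(A_\theta(x)D^2v)+H_\theta(x,Dv)\}=c$. It is assumed that there exist viscosity solutions $u$ of (E) and $v_\lambda$ of (E$_\lambda$) ($\lambda>0$), $C$-Lipschitz in $x$ uniformly in $t,\lambda$; then comparison holds, there is a unique $c\in\mathbb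 R$ (ergodic constant) for which (S) has a Lipschitz solution, and $u+ct$ is bounded. $\Sigma:=\{x:A_\theta(x)=0\ \forall\theta\}$. Assumption (H): there is $\mu_0>1$ with $H_\theta(x,\mu p)-\mu H_\theta(x,p)\ge(1-\mu)c$ for all $(x,p)$, $\theta$, $1<\mu<\mu_0$; and there is a compact $K\subset\Sigma$ with $H_\theta(x,p)\ge c$ for all $(x,p)\in K\times\mathbb R^N$, $\theta\in\Theta$, and $\inf_\theta\{H_\theta(x,\mu p)-\mu H_\theta(x,p)\}>(1-\mu)c$ for all $x\in\Sigma$ with $\operatorname{dist}(x,K)\ne0$, $p\ne0$, $1<\mu\le\mu_0$. *)

theory Defs
  imports "HOL-Analysis.Analysis"
begin

text \<open>The flat torus is represented by Z^N-periodic objects on R^N = real^'n.\<close>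

definition int_shift :: "int^'n \<Rightarrow> real^'n" where
  "int_shift k = (\<chi> i. real_of_int (k $ i))"

definition periodic_fun :: "(real^'n \<Rightarrow> 'b) \<Rightarrow> bool" where
  "periodic_fun f \<longleftrightarrow> (\<forall>x k. f (x + int_shift k) = f x)"

definition periodic_set :: "(real^'n) set \<Rightarrow> bool" where
  "periodic_set S \<longleftrightarrow> (\<forall>x k. x \<in> S \<longleftrightarrow> x + int_shift k \<in> S)"

definition diffA :: "('th \<Rightarrow> real^'n \<Rightarrow> real^'n^'n) \<Rightarrow> 'th \<Rightarrow> real^'n \<Rightarrow> real^'n^'n" where
  "diffA \<sigma> \<theta> x = \<sigma> \<theta> x ** transpose (\<sigma> \<theta> x)"

definition degen_set :: "('th \<Rightarrow> real^'n \<Rightarrow> real^'n^'n) \<Rightarrow> (real^'n) set" where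
  "degen_set \<sigma> = {x. \<forall>\<theta>. diffA \<sigma> \<theta> x = 0}"

definition bellmanF ::
  "('th \<Rightarrow> real^'n \<Rightarrow> real^'n^'n) \<Rightarrow> ('th \<Rightarrow> real^'n \<Rightarrow> real^'n \<Rightarrow> real)
    \<Rightarrow> real^'n \<Rightarrow> real^'n \<Rightarrow> real^'n^'n \<Rightarrow> real" where
  "bellmanF \<sigma> H x p X = (SUP \<theta>. - trace (diffA \<sigma> \<theta> x ** X) + H \<theta> x p)"

definition test_fun_xt ::
  "(real^'n \<Rightarrow> real \<Rightarrow> real) \<Rightarrow> (real^'n \<Rightarrow> real \<Rightarrow> real) \<Rightarrow> (real^'n \<Rightarrow> real \<Rightarrow> real^'n)
    \<Rightarrow> (real^'n \<Rightarrow> real \<Rightarrow> real^'n^'n) \<Rightarrow> bool" where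
  "test_fun_xt \<phi> \<phi>t D\<phi> D2\<phi> \<longleftrightarrow>
     (\<forall>x t. ((\<lambda>s. \<phi> x s) has_real_derivative \<phi>t x t) (at t)) \<and>
     (\<forall>x t. ((\<lambda>y. \<phi> y t) has_derivative (\<lambda>h. D\<phi> x t \<bullet> h)) (at x)) \<and>
     (\<forall>x t. ((\<lambda>y. D\<phi> y t) has_derivative (\<lambda>h. D2\<phi> x t *v h)) (at x)) \<and>
     continuous_on UNIV (\<lambda>z. \<phi>t (fst z) (snd z)) \<and>
     continuous_on UNIV (\<lambda>z. D\<phi> (fst z) (snd z)) \<and>
     continuous_on UNIV (\<lambda>z. D2\<phi> (fst z) (snd z))"

definition test_fun_x ::
  "(real^'n \<Rightarrow> real) \<Rightarrow> (real^'n \<Rightarrow> real^'n) \<Rightarrow> (real^'n \<Rightarrow> real^'n^'n) \<Rightarrow> bool" where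
  "test_fun_x \<psi> D\<psi> D2\<psi> \<longleftrightarrow>
     (\<forall>x. (\<psi> has_derivative (\<lambda>h. D\<psi> x \<bullet> h)) (at x)) \<and>
     (\<forall>x. (D\<psi> has_derivative (\<lambda>h. D2\<psi> x *v h)) (at x)) \<and>
     continuous_on UNIV D2\<psi>"

definition visc_sol_evol ::
  "(real^'n \<Rightarrow> real^'n \<Rightarrow> real^'n^'n \<Rightarrow> real) \<Rightarrow> (real^'n \<Rightarrow> real)
    \<Rightarrow> (real^'n \<Rightarrow> real \<Rightarrow> real) \<Rightarrow> bool" where
  "visc_sol_evol F u0 u \<longleftrightarrow>
     continuous_on {z. snd z \<ge> 0} (\<lambda>z. u (fst z) (snd z)) \<and>
     (\<forall>x. u x 0 = u0 x) \<and>
     (\<forall>\<phi> \<phi>t D\<phi> D2\<phi> x0 t0. test_fun_xt \<phi> \<phi>t D\<phi> D2\<phi> \<and> t0 > 0 \<and>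
        (\<exists>e>0. \<forall>y s. norm (y - x0) < e \<and> \<bar>s - t0\<bar> < e \<longrightarrow>
                u y s - \<phi> y s \<le> u x0 t0 - \<phi> x0 t0)
        \<longrightarrow> \<phi>t x0 t0 + F x0 (D\<phi> x0 t0) (D2\<phi> x0 t0) \<le> 0) \<and>
     (\<forall>\<phi> \<phi>t D\<phi> D2\<phi> x0 t0. test_fun_xt \<phi> \<phi>t D\<phi> D2\<phi> \<and> t0 > 0 \<and>
        (\<exists>e>0. \<forall>y s. norm (y - x0) < e \<and> \<bar>s - t0\<bar> < e \<longrightarrow>
                u y s - \<phi> y s \<ge> u x0 t0 - \<phi> x0 t0)
        \<longrightarrow> \<phi>t x0 t0 + F x0 (D\<phi> x0 t0) (D2\<phi> x0 t0) \<ge> 0)"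

definition visc_sol_stat ::
  "(real^'n \<Rightarrow> real \<Rightarrow> real^'n \<Rightarrow> real^'n^'n \<Rightarrow> real) \<Rightarrow> (real^'n \<Rightarrow> real) \<Rightarrow> bool" where
  "visc_sol_stat G v \<longleftrightarrow>
     continuous_on UNIV v \<and>
     (\<forall>\<psi> D\<psi> D2\<psi> x0. test_fun_x \<psi> D\<psi> D2\<psi> \<and>
        (\<exists>e>0. \<forall>y. norm (y - x0) < e \<longrightarrow> v y - \<psi> y \<le> v x0 - \<psi> x0)
        \<longrightarrow> G x0 (v x0) (D\<psi> x0) (D2\<psi> x0) \<le> 0) \<and>
     (\<forall>\<psi> D\<psi> D2\<psi> x0. test_fun_x \<psi> D\<psi> D2\<psi> \<and>
        (\<exists>e>0. \<forall>y. norm (y - x0) < e \<longrightarrow> v y - \<psi> y \<ge> v x0 - \<psi> x0)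
        \<longrightarrow> G x0 (v x0) (D\<psi> x0) (D2\<psi> x0) \<ge> 0)"

end

theory Submission
  imports Defs
begin


lemma trace_AAt: "trace (A ** transpose A) = A \<bullet> (A::real^'n^'m)"
  by (simp add: trace_def inner_vec_def matrix_matrix_mult_def transpose_def)

lemma trace_scal_id: "trace ((A::real^'n^'n) ** (k *\<^sub>R mat 1)) = k * trace A"
  by (simp add: matrix_scalar_ac trace_def sum_distrib_left)

lemma testfun:
  fixes x0 :: "real^'n" and a T c kap M eps :: real and k :: nat
  assumes Tpos: "T \<noteq> 0" and epos: "eps \<noteq> 0"
  defines "phi \<equiv> \<lambda>y r. - c * r + kap * (r - a) + M * ((r - a) / T) ^ k + ((y - x0) \<bullet> (y - x0)) / eps"
  shows "test_fun_xt phi (\<lambda>y r. - c + kap + M * (real k * ((r - a) / T) ^ (k - 1) * (1 / T)))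
     (\<lambda>y r. (2/eps) *\<^sub>R (y - x0)) (\<lambda>y r. (2/eps) *\<^sub>R mat 1)"
  unfolding test_fun_xt_def
proof (intro conjI allI)
  fix x t
  show "((\<lambda>s. phi x s) has_real_derivative - c + kap + M * (real k * ((t - a) / T) ^ (k - 1) * (1 / T))) (at t)"
    unfolding phi_def using Tpos by (auto intro!: derivative_eq_intros)
  show "((\<lambda>y. phi y t) has_derivative (\<lambda>h. (2/eps) *\<^sub>R (x - x0) \<bullet> h)) (at x)"
    unfolding phi_def
    by (auto intro!: derivative_eq_intros simp: inner_commute algebra_simps add_divide_distrib)
      (use epos in \<open>auto simp: field_simps\<close>)
  show "((\<lambda>y. (2/eps) *\<^sub>R (y - x0)) has_derivative (\<lambda>h. (2/eps) *\<^sub>R mat 1 *v h)) (at x)"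
    by (auto intro!: derivative_eq_intros simp: scaleR_matrix_vector_assoc[symmetric])
qed (use Tpos in \<open>auto intro!: continuous_intros\<close>)



lemma mainlem:
  fixes \<sigma> :: "'th::metric_space \<Rightarrow> real^'n \<Rightarrow> real^'n^'n"
    and H :: "'th \<Rightarrow> real^'n \<Rightarrow> real^'n \<Rightarrow> real"
    and u :: "real^'n \<Rightarrow> real \<Rightarrow> real"
  assumes C_pos: "C > 0"
    and sigma_lip: "\<And>\<theta>. C-lipschitz_on UNIV (\<sigma> \<theta>)"
    and H_zero: "\<And>\<theta> x. \<bar>H \<theta> x 0\<bar> \<le> C"
    and H_lip: "\<And>R. R > 0 \<Longrightarrow> \<exists>CR>0. \<forall>\<theta> x y p q. norm p \<le> R \<longrightarrow> norm q \<le> R \<longrightarrow>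
                  \<bar>H \<theta> x p - H \<theta> y q\<bar> \<le> CR * (norm (x - y) + norm (p - q))"
    and u_sol: "visc_sol_evol (bellmanF \<sigma> H) u0 u"
    and u_lip: "\<And>t. t \<ge> 0 \<Longrightarrow> C-lipschitz_on UNIV (\<lambda>x. u x t)"
    and x0deg: "x0 \<in> degen_set \<sigma>"
    and H2: "\<And>\<theta> p. H \<theta> x0 p \<ge> c"
    and ab: "0 < a" "a < b"
    and incr: "u x0 b + c * b > u x0 a + c * a"
  shows False
proof -
  define \<delta> where "\<delta> = (u x0 b + c*b) - (u x0 a + c*a)"
  have dpos: "\<delta> > 0" using incr by (simp add: \<delta>_def)
  define \<kappa> where "\<kappa> = \<delta>/(2*(b-a))"
  have kpos: "\<kappa> > 0" using dpos ab by (simp add: \<kappa>_def)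
  have kba: "\<kappa> * (b - a) = \<delta>/2" using ab by (simp add: \<kappa>_def field_simps)
  obtain CR where CRpos: "CR > 0" and CR: "\<And>\<theta> x y p q. norm p \<le> 2*C \<Longrightarrow> norm q \<le> 2*C \<Longrightarrow>
      \<bar>H \<theta> x p - H \<theta> y q\<bar> \<le> CR * (norm (x - y) + norm (p - q))"
    using H_lip[of "2*C"] C_pos by auto
  define \<epsilon> where "\<epsilon> = min (\<delta>/(2*C^2)) (min (1/(2*C)) (\<kappa>/(2*(2*C^4 + CR*C))))"
  have pd: "2*C^4 + CR*C > 0" using C_pos CRpos by (simp add: add_pos_pos)
  have epos: "\<epsilon> > 0" using dpos kpos C_pos pd by (simp add: \<epsilon>_def)
  have "\<epsilon> \<le> \<delta>/(2*C^2)" by (simp add: \<epsilon>_def)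
  hence e1: "C^2*\<epsilon> < \<delta>" using C_pos dpos by (simp add: field_simps)
  have "\<epsilon> \<le> 1/(2*C)" by (simp add: \<epsilon>_def)
  hence e2: "C*\<epsilon> < 1" using C_pos by (simp add: field_simps)
  have "\<epsilon> \<le> \<kappa>/(2*(2*C^4 + CR*C))" by (simp add: \<epsilon>_def)
  hence "(2*C^4+CR*C)*\<epsilon> \<le> \<kappa>/2" using pd by (simp add: field_simps)
  hence e3: "(2*C^4+CR*C)*\<epsilon> < \<kappa>" using kpos by linarith
  define T where "T = b + 1 - a"
  have Tpos: "T > 0" using ab by (simp add: T_def)
  define M where "M = \<bar>u x0 (b+1) - u x0 b\<bar> + C + \<bar>c\<bar> + \<delta> + 1"
  have Mpos: "M > 0" using C_pos dpos by (simp add: M_def)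
  define q where "q = (b - a)/T"
  have q01: "0 \<le> q" "q < 1" using ab by (auto simp: q_def T_def)
  obtain n where n: "q^n < \<delta>/(4*M)" using real_arch_pow_inv[of "\<delta>/(4*M)" q] q01 dpos Mpos by auto
  define k where "k = Suc n"
  have "q^k \<le> q^n" unfolding k_def using q01 by (simp add: mult_left_le_one_le)
  hence "M * q^k \<le> M * q^n" using Mpos by simp
  moreover have "M * q^n < \<delta>/4" using n Mpos by (simp add: field_simps)
  ultimately have Pb: "M * q^k \<le> \<delta>/4" by linarith
  define phi where "phi \<equiv> \<lambda>(y::real^'n) r. - c * r + \<kappa> * (r - a) + M * ((r - a) / T) ^ k + ((y - x0) \<bullet> (y - x0)) / \<epsilon>"
  define phit where "phit \<equiv> \<lambda>(y::real^'n) r. - c + \<kappa> + M * (real k * ((r - a) / T) ^ (k - 1) * (1 / T))"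
  define Dphi where "Dphi \<equiv> \<lambda>(y::real^'n) (r::real). (2/\<epsilon>) *\<^sub>R (y - x0)"
  define D2phi where "D2phi \<equiv> \<lambda>(y::real^'n) (r::real). ((2/\<epsilon>) *\<^sub>R mat 1 :: real^'n^'n)"
  have tf: "test_fun_xt phi phit Dphi D2phi"
    unfolding phi_def phit_def Dphi_def D2phi_def using Tpos epos by (intro testfun) simp_all
  have dd: "(y - x0) \<bullet> (y - x0) = (dist y x0)^2" for y
    by (simp add: dist_norm power2_norm_eq_inner)
  define \<Phi> where "\<Phi> = (\<lambda>z. u (fst z) (snd z) - phi (fst z) (snd z))"
  define S where "S = cball x0 1 \<times> {a..b+1}"
  have "continuous_on S (\<lambda>z. u (fst z) (snd z))"
    using u_sol unfolding visc_sol_evol_def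
    by (rule conjE, elim continuous_on_subset) (use ab in \<open>auto simp: S_def\<close>)
  hence "continuous_on S \<Phi>" unfolding \<Phi>_def phi_def using Tpos epos by (auto intro!: continuous_intros)
  moreover have "compact S" unfolding S_def by (intro compact_Times compact_cball compact_Icc)
  moreover have "S \<noteq> {}" using ab by (auto simp: S_def)
  ultimately obtain z where zS: "z \<in> S" and zmax: "\<And>w. w \<in> S \<Longrightarrow> \<Phi> w \<le> \<Phi> z"
    using continuous_attains_sup by metis
  define ys where "ys = fst z"
  define rs where "rs = snd z"
  have z_eq: "z = (ys, rs)" by (simp add: ys_def rs_def)
  have ysb: "dist x0 ys \<le> 1" and rsI: "a \<le> rs" "rs \<le> b+1" using zS by (auto simp: S_def z_eq)
  have ulip: "\<bar>u y t - u x0 t\<bar> \<le> C * dist y x0" if "t \<ge> 0" for y t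
    using lipschitz_onD[OF u_lip[OF that], of y x0] by (simp add: dist_real_def)
  have Phib: "\<Phi> (x0, b) = (u x0 a + c*a) + \<delta>/2 - M*q^k"
  proof -
    have "\<Phi> (x0, b) = u x0 b + c*b - \<kappa>*(b-a) - M*q^k" by (simp add: \<Phi>_def phi_def q_def)
    thus ?thesis using kba unfolding \<delta>_def by (simp add: field_simps)
  qed
  have x0b: "(x0, b) \<in> S" using ab by (simp add: S_def)
  have ge: "\<Phi> z \<ge> (u x0 a + c*a) + \<delta>/4" using zmax[OF x0b] Phib Pb by linarith
  have "rs \<noteq> a"
  proof
    assume ra: "rs = a"
    define d where "d = dist ys x0"
    have "u ys a \<le> u x0 a + C * d" using ulip[of a ys] ab by (simp add: d_def)
    moreover have "C*d - d^2/\<epsilon> \<le> C^2*\<epsilon>/4"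
    proof -
      have "0 \<le> (d - C*\<epsilon>/2)^2" by simp
      hence "C*d*\<epsilon> - d^2 \<le> C^2*\<epsilon>^2/4" by (simp add: power2_eq_square algebra_simps)
      thus ?thesis using epos by (simp add: field_simps power2_eq_square)
    qed
    moreover have "\<Phi> z = u ys a + c*a - d^2/\<epsilon>"
      using ra by (simp add: \<Phi>_def phi_def z_eq dd d_def k_def)
    ultimately show False using ge e1 by linarith
  qed
  moreover have "rs \<noteq> b+1"
  proof
    assume rb: "rs = b+1"
    define d where "d = dist ys x0"
    have "u ys (b+1) \<le> u x0 (b+1) + C * d" using ulip[of "b+1" ys] ab by (simp add: d_def)
    moreover have "C*d \<le> C" using ysb C_pos by (simp add: d_def dist_commute)
    moreover have "d^2/\<epsilon> \<ge> 0" using epos by simp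
    moreover have "\<Phi> z = u ys (b+1) + c*(b+1) - \<kappa>*(b+1-a) - M - d^2/\<epsilon>"
    proof -
      have "((b + 1 - a) / T) ^ k = 1" using Tpos by (simp add: T_def)
      thus ?thesis using rb by (simp add: \<Phi>_def phi_def z_eq dd d_def)
    qed
    moreover have "\<kappa>*(b+1-a) \<ge> \<delta>/2" using kba kpos by (simp add: algebra_simps)
    moreover have "u x0 (b+1) - u x0 b \<le> \<bar>u x0 (b+1) - u x0 b\<bar>" "c \<le> \<bar>c\<bar>" by simp_all
    ultimately have "\<Phi> z \<le> u x0 b + c*b - \<kappa>*(b+1-a) - \<delta> - 1"
      unfolding M_def by (simp add: algebra_simps)
    moreover have "\<Phi> z \<ge> u x0 b + c*b - \<delta> + \<delta>/4" using ge \<delta>_def by simp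
    moreover have "\<kappa>*(b+1-a) \<ge> \<delta>/2" using kba kpos by (simp add: algebra_simps)
    ultimately show False using dpos by linarith
  qed
  ultimately have rsI2: "a < rs" "rs < b+1" using rsI by auto
  define d where "d = dist ys x0"
  have d0: "d \<ge> 0" by (simp add: d_def)
  have dC: "d \<le> C*\<epsilon>"
  proof -
    have "(x0, rs) \<in> S" using rsI by (simp add: S_def)
    from zmax[OF this] have "u x0 rs - 0 \<le> u ys rs - d^2/\<epsilon>"
      by (simp add: \<Phi>_def phi_def z_eq dd d_def)
    moreover have "u ys rs \<le> u x0 rs + C*d" using ulip[of rs ys] rsI ab by (simp add: d_def)
    ultimately have "d^2/\<epsilon> \<le> C*d" by linarith
    hence "d*d \<le> (C*\<epsilon>)*d" using epos by (simp add: field_simps power2_eq_square)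
    thus ?thesis using d0 by (cases "d = 0") (use C_pos epos in auto)
  qed
  have d1: "d < 1" using dC e2 by linarith
  define e where "e = min (1 - d) (min (rs - a) (b+1-rs))"
  have epos2: "e > 0" using d1 rsI2 by (simp add: e_def)
  have locmax: "\<forall>y s. norm (y - ys) < e \<and> \<bar>s - rs\<bar> < e \<longrightarrow>
                u y s - phi y s \<le> u ys rs - phi ys rs"
  proof (intro allI impI)
    fix y s assume A: "norm (y - ys) < e \<and> \<bar>s - rs\<bar> < e"
    have "dist x0 y \<le> dist x0 ys + dist ys y" by (rule dist_triangle)
    hence "dist x0 y \<le> 1" using A by (simp add: e_def d_def dist_norm norm_minus_commute dist_commute)
    moreover have "a \<le> s" "s \<le> b+1" using A by (auto simp: e_def)
    ultimately have "(y, s) \<in> S" by (simp add: S_def)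
    from zmax[OF this] show "u y s - phi y s \<le> u ys rs - phi ys rs" by (simp add: \<Phi>_def z_eq)
  qed
  have visc: "phit ys rs + bellmanF \<sigma> H ys (Dphi ys rs) (D2phi ys rs) \<le> 0"
    using u_sol tf epos2 locmax rsI2 ab unfolding visc_sol_evol_def by (meson less_trans)
  have phit_ge: "phit ys rs \<ge> - c + \<kappa>"
    unfolding phit_def using Mpos Tpos rsI2 by (auto intro!: mult_nonneg_nonneg)
  define p where "p = Dphi ys rs"
  have np: "norm p = 2*d/\<epsilon>" using epos by (simp add: p_def Dphi_def d_def dist_norm)
  have np2: "norm p \<le> 2*C"
  proof -
    have "2*d/\<epsilon> \<le> 2*(C*\<epsilon>)/\<epsilon>" using dC epos by (intro divide_right_mono) auto
    thus ?thesis using np epos by simp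
  qed
  have sig0: "\<sigma> \<theta> x0 = 0" for \<theta>
  proof -
    have "diffA \<sigma> \<theta> x0 = 0" using x0deg by (simp add: degen_set_def)
    hence "trace (diffA \<sigma> \<theta> x0) = 0" by (simp add: trace_def)
    hence "\<sigma> \<theta> x0 \<bullet> \<sigma> \<theta> x0 = 0" by (simp add: diffA_def trace_AAt)
    thus ?thesis by simp
  qed
  have trA: "trace (diffA \<sigma> \<theta> ys ** D2phi ys rs) = (2/\<epsilon>) * (norm (\<sigma> \<theta> ys))^2" for \<theta>
    by (simp add: D2phi_def diffA_def trace_scal_id trace_AAt power2_norm_eq_inner)
  have nsig: "norm (\<sigma> \<theta> ys) \<le> C * d" for \<theta>
    using lipschitz_onD[OF sigma_lip[of \<theta>], of ys x0] by (simp add: sig0 d_def dist_norm)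
  have trA2: "trace (diffA \<sigma> \<theta> ys ** D2phi ys rs) \<le> 2*C^4*\<epsilon>" for \<theta>
  proof -
    have "(norm (\<sigma> \<theta> ys))^2 \<le> (C*d)^2" using nsig[of \<theta>] by (simp add: power_mono)
    also have "\<dots> \<le> (C*(C*\<epsilon>))^2" using dC d0 C_pos by (intro power_mono) auto
    finally have "(2/\<epsilon>) * (norm (\<sigma> \<theta> ys))^2 \<le> (2/\<epsilon>) * (C*(C*\<epsilon>))^2"
      using epos by (intro mult_left_mono) auto
    also have "\<dots> = 2*C^4*\<epsilon>" using epos by (simp add: power2_eq_square field_simps power4_eq_xxxx)
    finally show ?thesis using trA by simp
  qed
  have trA0: "trace (diffA \<sigma> \<theta> ys ** D2phi ys rs) \<ge> 0" for \<theta>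
    using trA[of \<theta>] epos by simp
  have bdd: "bdd_above (range (\<lambda>\<theta>. - trace (diffA \<sigma> \<theta> ys ** D2phi ys rs) + H \<theta> ys p))"
  proof (rule bdd_aboveI2)
    fix \<theta>
    have "\<bar>H \<theta> ys p - H \<theta> ys 0\<bar> \<le> CR * (norm (ys - ys) + norm (p - 0))"
      using CR[of p 0 \<theta> ys ys] np2 C_pos by simp
    hence "H \<theta> ys p \<le> C + CR * (2*C)" using H_zero[of \<theta> ys] np2 CRpos
      by simp (smt (verit) mult_left_mono)
    thus "- trace (diffA \<sigma> \<theta> ys ** D2phi ys rs) + H \<theta> ys p \<le> C + CR*(2*C)"
      using trA0[of \<theta>] by linarith
  qed
  obtain \<theta>0 :: 'th where True by simp
  have "bellmanF \<sigma> H ys p (D2phi ys rs) \<ge> - trace (diffA \<sigma> \<theta>0 ys ** D2phi ys rs) + H \<theta>0 ys p"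
    unfolding bellmanF_def by (rule cSUP_upper[OF _ bdd]) simp
  moreover have "H \<theta>0 ys p \<ge> c - CR*(C*\<epsilon>)"
  proof -
    have "\<bar>H \<theta>0 ys p - H \<theta>0 x0 p\<bar> \<le> CR * (norm (ys - x0) + norm (p - p))"
      using CR[of p p \<theta>0 ys x0] np2 by simp
    hence "H \<theta>0 ys p \<ge> H \<theta>0 x0 p - CR*d" by (simp add: d_def dist_norm)
    moreover have "CR*d \<le> CR*(C*\<epsilon>)" using dC CRpos by simp
    ultimately show ?thesis using H2[of \<theta>0 p] by linarith
  qed
  ultimately have "bellmanF \<sigma> H ys p (D2phi ys rs) \<ge> c - 2*C^4*\<epsilon> - CR*(C*\<epsilon>)"
    using trA2[of \<theta>0] by linarith
  thus False using visc phit_ge e3 unfolding p_def by (simp add: algebra_simps)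
qed


theorem lemma5p1:
  fixes \<sigma> :: "'th::metric_space \<Rightarrow> real^'n \<Rightarrow> real^'n^'n"
    and H :: "'th \<Rightarrow> real^'n \<Rightarrow> real^'n \<Rightarrow> real"
    and C c \<mu>0 :: real
    and u0 :: "real^'n \<Rightarrow> real"
    and u :: "real^'n \<Rightarrow> real \<Rightarrow> real"
    and K :: "(real^'n) set"
  assumes C_pos: "C > 0"
    \<comment> \<open>standing assumptions on sigma_theta\<close>
    and sigma_per: "\<And>\<theta>. periodic_fun (\<sigma> \<theta>)"
    and sigma_bd: "\<And>\<theta> x. norm (\<sigma> \<theta> x) \<le> C"
    and sigma_lip: "\<And>\<theta>. C-lipschitz_on UNIV (\<sigma> \<theta>)"
    \<comment> \<open>standing assumptions on H_theta\<close>
    and H_per: "\<And>\<theta> p. periodic_fun (\<lambda>x. H \<theta> x p)"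
    and H_zero: "\<And>\<theta> x. \<bar>H \<theta> x 0\<bar> \<le> C"
    and H_lip: "\<And>R. R > 0 \<Longrightarrow> \<exists>CR>0. \<forall>\<theta> x y p q. norm p \<le> R \<longrightarrow> norm q \<le> R \<longrightarrow>
                  \<bar>H \<theta> x p - H \<theta> y q\<bar> \<le> CR * (norm (x - y) + norm (p - q))"
    \<comment> \<open>u solves (E), C-Lipschitz in x uniformly in t\<close>
    and u_sol: "visc_sol_evol (bellmanF \<sigma> H) u0 u"
    and u_per: "\<And>t. periodic_fun (\<lambda>x. u x t)"
    and u_lip: "\<And>t. t \<ge> 0 \<Longrightarrow> C-lipschitz_on UNIV (\<lambda>x. u x t)"
    \<comment> \<open>v_lambda solves (E_lambda), C-Lipschitz uniformly in lambda\<close>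
    and v_lam: "\<And>lam. lam > 0 \<Longrightarrow> \<exists>v. periodic_fun v \<and> C-lipschitz_on UNIV v \<and>
                  visc_sol_stat (\<lambda>x r p X. lam * r + bellmanF \<sigma> H x p X) v"
    \<comment> \<open>c is the ergodic constant: (S) has a Lipschitz solution\<close>
    and c_erg: "\<exists>v L. periodic_fun v \<and> L-lipschitz_on UNIV v \<and>
                  visc_sol_stat (\<lambda>x r p X. bellmanF \<sigma> H x p X - c) v"
    \<comment> \<open>assumption (H)\<close>
    and mu0: "\<mu>0 > 1"
    and H1: "\<And>\<theta> x p \<mu>. 1 < \<mu> \<Longrightarrow> \<mu> < \<mu>0 \<Longrightarrow> H \<theta> x (\<mu> *\<^sub>R p) - \<mu> * H \<theta> x p \<ge> (1 - \<mu>) * c"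
    and K_closed: "closed K" and K_per: "periodic_set K"
    and K_sub: "K \<subseteq> degen_set \<sigma>"
    and H2: "\<And>\<theta> x p. x \<in> K \<Longrightarrow> H \<theta> x p \<ge> c"
    and H3: "\<And>x p \<mu>. x \<in> degen_set \<sigma> \<Longrightarrow> x \<notin> K \<Longrightarrow> p \<noteq> 0 \<Longrightarrow> 1 < \<mu> \<Longrightarrow> \<mu> \<le> \<mu>0 \<Longrightarrow>
                 (INF \<theta>. H \<theta> x (\<mu> *\<^sub>R p) - \<mu> * H \<theta> x p) > (1 - \<mu>) * c"
  shows "\<forall>x0\<in>K. \<forall>s t. 0 \<le> s \<longrightarrow> s \<le> t \<longrightarrow> u x0 t + c * t \<le> u x0 s + c * s"
proof (intro ballI allI impI)
  fix x0 and s t :: real assume x0K: "x0 \<in> K" and s0: "0 \<le> s" and st: "s \<le> t"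
  have x0deg: "x0 \<in> degen_set \<sigma>" using K_sub x0K by auto
  have H2': "\<And>\<theta> p. H \<theta> x0 p \<ge> c" using H2 x0K by auto
  have pos: "u x0 t + c*t \<le> u x0 a + c*a" if "0 < a" "a \<le> t" for a
  proof (cases "a = t")
    case False
    hence "a < t" using that by simp
    show ?thesis
    proof (rule ccontr)
      assume "\<not> ?thesis"
      hence "u x0 t + c*t > u x0 a + c*a" by simp
      from mainlem[OF C_pos sigma_lip H_zero H_lip u_sol u_lip x0deg H2' \<open>0 < a\<close> \<open>a < t\<close> this]
      show False .
    qed
  qed simp
  show "u x0 t + c * t \<le> u x0 s + c * s"
  proof (cases "s > 0")
    case True thus ?thesis using pos st by simp
  next
    case False
    hence s00: "s = 0" using s0 by simp
    show ?thesis
    proof (cases "t = 0")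
      case True thus ?thesis using s00 by simp
    next
      case False
      hence tpos: "t > 0" using st s00 by simp
      have cu: "continuous_on {z. snd z \<ge> 0} (\<lambda>z. u (fst z) (snd z))"
        using u_sol unfolding visc_sol_evol_def by simp
      have "continuous_on {0..} (\<lambda>r. u (fst (x0, r)) (snd (x0, r)))"
        by (rule continuous_on_compose2[OF cu]) (auto intro!: continuous_intros)
      hence "continuous_on {0..} (\<lambda>r. u x0 r + c * r)" by (auto intro!: continuous_intros)
      hence cw: "\<forall>e>0. \<exists>d>0. \<forall>x'\<in>{0..}. dist x' 0 < d \<longrightarrow> dist (u x0 x' + c*x') (u x0 0 + c*0) < e"
        unfolding continuous_on_iff by (metis atLeast_iff order_refl)
      show ?thesis
      proof (rule ccontr)
        assume "\<not> ?thesis"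
        hence gap: "u x0 t + c*t - (u x0 0 + c*0) > 0" using s00 by simp
        obtain d where d: "d > 0" and dH: "\<forall>x'\<in>{0..}. dist x' 0 < d \<longrightarrow> dist (u x0 x' + c*x') (u x0 0 + c*0) < u x0 t + c*t - (u x0 0 + c*0)"
          using cw gap by blast
        define a where "a = min (d/2) t"
        have a0: "a > 0" "a \<le> t" using d tpos by (auto simp: a_def)
        have "dist a 0 < d" using a0 d by (simp add: a_def dist_real_def)
        hence "dist (u x0 a + c*a) (u x0 0 + c*0) < u x0 t + c*t - (u x0 0 + c*0)"
          using dH a0 by auto
        hence "u x0 a + c*a < u x0 t + c*t" by (simp add: dist_real_def abs_less_iff)
        thus False using pos[OF a0] by simp
      qed
    qed
  qed
qed

end
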